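(* Suppose Assumption A1 holds, $F^*>-\infty$, and let $x^k$ be generated by Algorithm (1-RCD) with the indices $i_k$ drawn i.i.d. from the uniform distribution on $\{1,\dots,N\}$. Then: (i) the sequence of random variables $M_1(x^k,L)$ converges to $0$ almost surely, and $F(x^k)$ converges almost surely to some random variable $\bar F$; (ii) every accumulation point of the sequence $x^k$ is a stationary point of problem $\min_x F(x)$, i.e. a point $x^*$ with $0\in\nabla f(x^* )+\partial h(x^* )$.
   Context: Block structure: $n=\sum_{i=1}^N n_i$, $I_n=[U_1\ \dots\ U_N]$ with $U_i\in\mathbb{R}^{n\times n_i}$, $x_i=U_i^Tx$, $\nabla_i f(x)=U_i^T\nabla f(x)$. Problem: $F^*=\min_{x\in\mathbb{R}^n}F(x):=f(x)+h(x)$. Assumption A1: (i) $f$ is differentiable and there are constants $L_i>0$ with $\|\nabla_i f(x+U_is_i)-\nabla_i f(x)\|\le L_i\|s_i\|$ for all $s_i\in\mathbb{R}^{n_i}$, $x\in\mathbb{R}^n$, $i=1,\dots,N$; (ii) $h$ is proper, convex, continuous and block separable, $h(x)=\sum_{i=1}^N h_i(x_i)$ with each $h_i:\mathbb{R}^{n_i}\to\mathbb{R}$ convex. $L=[L_1\dots L_N]^T$. Algorithm (1-RCD): given $x^0\in\mathbb{R}^n$, for $k\ge0$ choose an index $i_k\in\{1,\dots,N\}$ at random (i.i.d. across iterations), compute $d_{i_k}=\arg\min_{s\in\mathbb{R}^{n_{i_k}}}\ f(x^k)+\langle\nabla_{i_k}f(x^k),s\rangle+\frac{L_{i_k}}{2}\|s\|^2+h(x^k+U_{i_k}s)$,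 and set $x^{k+1}=x^k+U_{i_k}d_{i_k}$. Notation: $\|x\|_L=(\sum_i L_i\|x_i\|^2)^{1/2}$, $\|y\|_L^*=(\sum_i L_i^{-1}\|y_i\|^2)^{1/2}$, $D_L=\mathrm{diag}(L_1I_{n_1},\dots,L_NI_{n_N})$, $d_L(x)=\arg\min_{s\in\mathbb{R}^n} f(x)+\langle\nabla f(x),s\rangle+\frac12\|s\|_L^2+h(x+s)$, $M_1(x,L)=\|D_L d_L(x)\|_L^*$. *)

theory Defs
  imports "HOL-Analysis.Analysis" "HOL-Probability.Probability"
begin

text \<open>Coordinates of R^n are indexed by a finite type 'n; blocks by a finite type 'b
  (N = CARD('b)); blk j is the block that coordinate j belongs to.\<close>

definition blockvec :: "('n \<Rightarrow> 'b) \<Rightarrow> 'b \<Rightarrow> (real^'n) set" where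
  "blockvec blk i = {s. \<forall>j. blk j \<noteq> i \<longrightarrow> s $ j = 0}"

text \<open>U_i U_i^T x: the block-i part of x, embedded into R^n.\<close>
definition restr :: "('n \<Rightarrow> 'b) \<Rightarrow> 'b \<Rightarrow> real^'n \<Rightarrow> real^'n" where
  "restr blk i x = (\<chi> j. if blk j = i then x $ j else 0)"

definition normL :: "('b \<Rightarrow> real) \<Rightarrow> ('n \<Rightarrow> 'b) \<Rightarrow> real^'n \<Rightarrow> real" where
  "normL L blk x = sqrt (\<Sum>i\<in>UNIV. L i * (norm (restr blk i x))\<^sup>2)"

definition normL_dual :: "('b \<Rightarrow> real) \<Rightarrow> ('n \<Rightarrow> 'b) \<Rightarrow> real^'n \<Rightarrow> real" where
  "normL_dual L blk y = sqrt (\<Sum>i\<in>UNIV. inverse (L i) * (norm (restr blk i y))\<^sup>2)"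

definition DL :: "('b \<Rightarrow> real) \<Rightarrow> ('n \<Rightarrow> 'b) \<Rightarrow> real^'n \<Rightarrow> real^'n" where
  "DL L blk y = (\<chi> j. L (blk j) * y $ j)"

definition rcd_dir ::
  "(real^'n \<Rightarrow> real) \<Rightarrow> (real^'n \<Rightarrow> real^'n) \<Rightarrow> (real^'n \<Rightarrow> real) \<Rightarrow> ('b \<Rightarrow> real)
   \<Rightarrow> ('n \<Rightarrow> 'b) \<Rightarrow> real^'n \<Rightarrow> 'b \<Rightarrow> real^'n" where
  "rcd_dir f g h L blk x i =
     arg_min (\<lambda>s. f x + restr blk i (g x) \<bullet> s + L i / 2 * (norm s)\<^sup>2 + h (x + s))
             (\<lambda>s. s \<in> blockvec blk i)"

primrec rcd_seq ::
  "(real^'n \<Rightarrow> real) \<Rightarrow> (real^'n \<Rightarrow> real^'n) \<Rightarrow> (real^'n \<Rightarrow> real) \<Rightarrow> ('b \<Rightarrow> real)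
   \<Rightarrow> ('n \<Rightarrow> 'b) \<Rightarrow> real^'n \<Rightarrow> (nat \<Rightarrow> 'b) \<Rightarrow> nat \<Rightarrow> real^'n" where
  "rcd_seq f g h L blk x0 idx 0 = x0"
| "rcd_seq f g h L blk x0 idx (Suc k) =
     rcd_seq f g h L blk x0 idx k
     + rcd_dir f g h L blk (rcd_seq f g h L blk x0 idx k) (idx k)"

definition dL ::
  "(real^'n \<Rightarrow> real) \<Rightarrow> (real^'n \<Rightarrow> real^'n) \<Rightarrow> (real^'n \<Rightarrow> real) \<Rightarrow> ('b \<Rightarrow> real)
   \<Rightarrow> ('n \<Rightarrow> 'b) \<Rightarrow> real^'n \<Rightarrow> real^'n" where
  "dL f g h L blk x =
     arg_min (\<lambda>s. f x + g x \<bullet> s + 1/2 * (normL L blk s)\<^sup>2 + h (x + s)) (\<lambda>s. True)"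

definition M1 ::
  "(real^'n \<Rightarrow> real) \<Rightarrow> (real^'n \<Rightarrow> real^'n) \<Rightarrow> (real^'n \<Rightarrow> real) \<Rightarrow> ('b \<Rightarrow> real)
   \<Rightarrow> ('n \<Rightarrow> 'b) \<Rightarrow> real^'n \<Rightarrow> real" where
  "M1 f g h L blk x = normL_dual L blk (DL L blk (dL f g h L blk x))"

definition subdifferential :: "(real^'n \<Rightarrow> real) \<Rightarrow> real^'n \<Rightarrow> (real^'n) set" where
  "subdifferential h x = {v. \<forall>y. h y \<ge> h x + v \<bullet> (y - x)}"

end

theory Submission
  imports Defs
begin


lemma restr_nth: "restr blk i x $ j = (if blk j = i then x $ j else 0)"
  by (simp add: restr_def)

lemma restr_in_blockvec: "restr blk i x \<in> blockvec blk i"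
  by (simp add: restr_def blockvec_def)

lemma restr_blockvec: "s \<in> blockvec blk i \<Longrightarrow> restr blk i s = s"
  by (auto simp: restr_def blockvec_def vec_eq_iff)

lemma restr_other: "s \<in> blockvec blk i \<Longrightarrow> j \<noteq> i \<Longrightarrow> restr blk j s = 0"
  by (auto simp: restr_def blockvec_def vec_eq_iff)

lemma restr_add: "restr blk i (x + y) = restr blk i x + restr blk i y"
  by (auto simp: restr_def vec_eq_iff)

lemma restr_diff: "restr blk i (x - y) = restr blk i x - restr blk i y"
  by (auto simp: restr_def vec_eq_iff)

lemma restr_scale: "restr blk i (c *\<^sub>R x) = c *\<^sub>R restr blk i x"
  by (auto simp: restr_def vec_eq_iff)

lemma restr_zero[simp]: "restr blk i 0 = 0"
  by (auto simp: restr_def vec_eq_iff)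

lemma restr_sum: "restr blk i (sum F A) = (\<Sum>a\<in>A. restr blk i (F a))"
  by (auto simp: restr_def vec_eq_iff sum_component)

lemma sum_restr: "(\<Sum>i\<in>UNIV. restr blk i x) = (x::real^'n)"
  for blk :: "'n::finite \<Rightarrow> 'b::finite"
  by (simp add: vec_eq_iff sum_component restr_def)

lemma blockvec_add: "s \<in> blockvec blk i \<Longrightarrow> t \<in> blockvec blk i \<Longrightarrow> s + t \<in> blockvec blk i"
  by (simp add: blockvec_def)

lemma blockvec_scale: "s \<in> blockvec blk i \<Longrightarrow> c *\<^sub>R s \<in> blockvec blk i"
  by (simp add: blockvec_def)

lemma blockvec_zero[simp]: "0 \<in> blockvec blk i"
  by (simp add: blockvec_def)

lemma closed_blockvec: "closed (blockvec blk i)"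
proof -
  have "blockvec blk i = (\<Inter>j\<in>{j. blk j \<noteq> i}. {s. s $ j = 0})"
    by (auto simp: blockvec_def)
  moreover have "closed {s::real^'a. s $ j = 0}" for j
    by (intro closed_Collect_eq continuous_intros)
  ultimately show ?thesis by auto
qed

lemma inner_restr: "s \<in> blockvec blk i \<Longrightarrow> restr blk i u \<bullet> s = u \<bullet> s"
  by (auto simp: inner_vec_def restr_def blockvec_def intro!: sum.cong)

lemma sum_inner_restr: "(\<Sum>i\<in>UNIV. restr blk i u \<bullet> restr blk i v) = u \<bullet> (v::real^'n)"
  for blk :: "'n::finite \<Rightarrow> 'b::finite"
proof -
  have "(\<Sum>i\<in>UNIV. restr blk i u \<bullet> restr blk i v) = (\<Sum>i\<in>UNIV. u \<bullet> restr blk i v)"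
    by (simp add: inner_restr restr_in_blockvec)
  also have "\<dots> = u \<bullet> (\<Sum>i\<in>UNIV. restr blk i v)" by (simp add: inner_sum_right)
  finally show ?thesis by (simp add: sum_restr)
qed

lemma restr_DL: "restr blk i (DL L blk y) = L i *\<^sub>R restr blk i y"
  by (auto simp: restr_def DL_def vec_eq_iff)

lemma normL_sq: "(normL L blk s)\<^sup>2 = (\<Sum>i\<in>UNIV. L i * (norm (restr blk i s))\<^sup>2)"
  if "\<And>i. L i > 0"
proof -
  have "0 \<le> (\<Sum>i\<in>UNIV. L i * (norm (restr blk i s))\<^sup>2)"
    by (intro sum_nonneg mult_nonneg_nonneg) (auto simp: less_imp_le[OF that])
  then show ?thesis unfolding normL_def by simp
qed

lemma normL_dual_DL: "normL_dual L blk (DL L blk y) = sqrt (\<Sum>i\<in>UNIV. L i * (norm (restr blk i y))\<^sup>2)"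
  if "\<And>i. L i > 0"
proof -
  have "inverse (L i) * (norm (restr blk i (DL L blk y)))\<^sup>2 = L i * (norm (restr blk i y))\<^sup>2" for i
    using that[of i] by (simp add: restr_DL power2_eq_square field_simps)
  then show ?thesis unfolding normL_dual_def by simp
qed

lemma h_block:
  fixes h :: "real^'n \<Rightarrow> real" and hb :: "'b::finite \<Rightarrow> real^'n \<Rightarrow> real"
  assumes h_sep: "\<And>x. h x = (\<Sum>i\<in>UNIV. hb i (restr blk i x))"
    and s: "s \<in> blockvec blk i"
  shows "h (x + s) - h x = hb i (restr blk i x + s) - hb i (restr blk i x)"
proof -
  have "h (x + s) - h x = (\<Sum>j\<in>UNIV. hb j (restr blk j (x + s)) - hb j (restr blk j x))"
    by (simp add: h_sep sum_subtractf)
  also have "\<dots> = (\<Sum>j\<in>UNIV. if j = i then hb i (restr blk i x + s) - hb i (restr blk i x) else 0)"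
    by (intro sum.cong) (auto simp: restr_add restr_other[OF s] restr_blockvec[OF s])
  finally show ?thesis by simp
qed




locale rcd =
  fixes f h :: "real^'n \<Rightarrow> real" and g :: "real^'n \<Rightarrow> real^'n"
    and hb :: "'b::finite \<Rightarrow> real^'n \<Rightarrow> real" and L :: "'b \<Rightarrow> real" and blk :: "'n \<Rightarrow> 'b"
  assumes grad: "\<And>x. (f has_derivative (\<lambda>v. g x \<bullet> v)) (at x)"
    and L_pos: "\<And>i. L i > 0"
    and lipschitz: "\<And>i x s. s \<in> blockvec blk i \<Longrightarrow>
          norm (restr blk i (g (x + s)) - restr blk i (g x)) \<le> L i * norm s"
    and h_sep: "\<And>x. h x = (\<Sum>i\<in>UNIV. hb i (restr blk i x))"
    and h_convex: "convex_on UNIV h"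
    and h_cont: "continuous_on UNIV h"
begin

lemma deriv_line:
  "((\<lambda>t. f (x + t *\<^sub>R s)) has_real_derivative (g (x + t *\<^sub>R s) \<bullet> s)) (at t)"
proof -
  have "((\<lambda>t. x + t *\<^sub>R s) has_derivative (\<lambda>u. u *\<^sub>R s)) (at t)"
    by (auto intro!: derivative_eq_intros)
  from has_derivative_compose[OF this grad]
  have "((\<lambda>t. f (x + t *\<^sub>R s)) has_derivative (\<lambda>u. g (x + t *\<^sub>R s) \<bullet> (u *\<^sub>R s))) (at t)" .
  moreover have "(\<lambda>u. g (x + t *\<^sub>R s) \<bullet> (u *\<^sub>R s)) = (*) (g (x + t *\<^sub>R s) \<bullet> s)"
    by (auto simp: fun_eq_iff)
  ultimately show ?thesis by (simp add: has_field_derivative_def)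
qed

lemma descent_abs:
  assumes s: "s \<in> blockvec blk i"
  shows "\<bar>f (x + s) - f x - g x \<bullet> s\<bar> \<le> L i / 2 * (norm s)\<^sup>2"
proof -
  have key: "\<sigma> * (f (x + s) - f x - g x \<bullet> s) \<le> L i / 2 * (norm s)\<^sup>2"
    if \<sigma>: "\<bar>\<sigma>\<bar> = 1" for \<sigma> :: real
  proof -
    define \<psi> where "\<psi> t = \<sigma> * (f (x + t *\<^sub>R s) - f x - t * (g x \<bullet> s)) - L i / 2 * t\<^sup>2 * (norm s)\<^sup>2" for t
    define \<psi>' where "\<psi>' t = \<sigma> * (g (x + t *\<^sub>R s) \<bullet> s - g x \<bullet> s) - L i * t * (norm s)\<^sup>2" for t
    have d: "(\<psi> has_real_derivative \<psi>' t) (at t)" for t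
      unfolding \<psi>_def \<psi>'_def
      apply (rule derivative_eq_intros deriv_line refl)+
      apply (simp add: algebra_simps power2_eq_square)
      done
    obtain z where z: "0 < z" "z < 1" "\<psi> 1 - \<psi> 0 = (1 - 0) * \<psi>' z"
      using MVT2[of 0 1 \<psi> \<psi>'] d by auto
    have zs: "z *\<^sub>R s \<in> blockvec blk i" by (rule blockvec_scale[OF s])
    have "\<bar>g (x + z *\<^sub>R s) \<bullet> s - g x \<bullet> s\<bar> = \<bar>(restr blk i (g (x + z *\<^sub>R s)) - restr blk i (g x)) \<bullet> s\<bar>"
      by (simp add: inner_diff_left inner_restr[OF s])
    also have "\<dots> \<le> norm (restr blk i (g (x + z *\<^sub>R s)) - restr blk i (g x)) * norm s"
      by (rule Cauchy_Schwarz_ineq2)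
    also have "\<dots> \<le> L i * norm (z *\<^sub>R s) * norm s"
      by (intro mult_right_mono lipschitz zs) auto
    also have "\<dots> = L i * z * (norm s)\<^sup>2"
      using z by (simp add: power2_eq_square)
    finally have b: "\<bar>g (x + z *\<^sub>R s) \<bullet> s - g x \<bullet> s\<bar> \<le> L i * z * (norm s)\<^sup>2" .
    have "\<sigma> * (g (x + z *\<^sub>R s) \<bullet> s - g x \<bullet> s) \<le> \<bar>\<sigma> * (g (x + z *\<^sub>R s) \<bullet> s - g x \<bullet> s)\<bar>"
      by simp
    also have "\<dots> = \<bar>g (x + z *\<^sub>R s) \<bullet> s - g x \<bullet> s\<bar>" using \<sigma> by (simp add: abs_mult)
    finally have "\<psi>' z \<le> 0" using b unfolding \<psi>'_def by linarith
    with z have "\<psi> 1 \<le> \<psi> 0" by simp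
    then show ?thesis unfolding \<psi>_def by simp
  qed
  have a: "f (x + s) - f x - g x \<bullet> s \<le> L i / 2 * (norm s)\<^sup>2" using key[of 1] by simp
  have b: "- (f (x + s) - f x - g x \<bullet> s) \<le> L i / 2 * (norm s)\<^sup>2" using key[of "-1"] by simp
  show ?thesis using a b abs_le_iff by blast
qed

lemma descent:
  assumes s: "s \<in> blockvec blk i"
  shows "f (x + s) \<le> f x + g x \<bullet> s + L i / 2 * (norm s)\<^sup>2"
  using descent_abs[OF s, of x] unfolding abs_le_iff by linarith

lemma f_cont: "isCont f x"
  using grad by (rule has_derivative_continuous)

lemma g_comp_cont: "isCont (\<lambda>y. g y $ j) x"
  unfolding continuous_at_eps_delta
proof (intro allI impI)
  fix e :: real assume e: "e > 0"
  define i where "i = blk j"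
  define t where "t = e / (2 * L i)"
  have Li: "L i > 0" by (rule L_pos)
  have t: "t > 0" using e Li by (simp add: t_def)
  have ax: "t *\<^sub>R axis j (1::real) \<in> blockvec blk i"
    by (auto simp: blockvec_def axis_def i_def)
  define q where "q y = (f (y + t *\<^sub>R axis j 1) - f y) / t" for y
  have approx: "\<bar>g y $ j - q y\<bar> \<le> e / 4" for y
  proof -
    have "\<bar>f (y + t *\<^sub>R axis j 1) - f y - g y \<bullet> (t *\<^sub>R axis j 1)\<bar> \<le> L i / 2 * (norm (t *\<^sub>R axis j (1::real)))\<^sup>2"
      by (rule descent_abs[OF ax])
    also have "\<dots> = L i / 2 * t\<^sup>2" using t by (simp add: power2_eq_square)
    finally have "\<bar>f (y + t *\<^sub>R axis j 1) - f y - t * g y $ j\<bar> \<le> L i / 2 * t\<^sup>2"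
      by (simp add: inner_axis)
    then have B: "\<bar>f (y + t *\<^sub>R axis j 1) - f y - t * g y $ j\<bar> \<le> (L i / 2 * t) * t"
      by (simp add: power2_eq_square mult.assoc)
    have "\<bar>(f (y + t *\<^sub>R axis j 1) - f y - t * g y $ j) / t\<bar> = \<bar>f (y + t *\<^sub>R axis j 1) - f y - t * g y $ j\<bar> / t"
      using t by (simp add: abs_divide)
    also have "\<dots> \<le> L i / 2 * t" using B t by (simp add: pos_divide_le_eq)
    finally have "\<bar>(f (y + t *\<^sub>R axis j 1) - f y - t * g y $ j) / t\<bar> \<le> L i / 2 * t" .
    moreover have "(f (y + t *\<^sub>R axis j 1) - f y - t * g y $ j) / t = q y - g y $ j"
      using t by (simp add: q_def field_simps)
    ultimately have A: "\<bar>q y - g y $ j\<bar> \<le> L i / 2 * t" by simp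
    have Lt: "L i / 2 * t = e / 4" using Li by (simp add: t_def)
    have "\<bar>g y $ j - q y\<bar> = \<bar>q y - g y $ j\<bar>" by (rule abs_minus_commute)
    with A Lt show ?thesis by linarith
  qed
  have "isCont q x" unfolding q_def
    by (intro continuous_intros isCont_o2[OF _ f_cont] ) (use t in auto)
  then obtain d where d: "d > 0" "\<And>y. dist y x < d \<Longrightarrow> dist (q y) (q x) < e / 2"
    unfolding continuous_at_eps_delta using e by (meson half_gt_zero)
  show "\<exists>d>0. \<forall>y. dist y x < d \<longrightarrow> dist (g y $ j) (g x $ j) < e"
  proof (intro exI conjI allI impI)
    fix y assume "dist y x < d"
    then have "\<bar>q y - q x\<bar> < e / 2" using d by (simp add: dist_real_def)
    with approx[of y] approx[of x] show "dist (g y $ j) (g x $ j) < e"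
      unfolding dist_real_def abs_le_iff abs_less_iff by linarith
  qed (rule d)
qed

lemma g_cont: "isCont g x"
proof -
  have "((\<lambda>y. \<chi> j. g y $ j) \<longlongrightarrow> (\<chi> j. g x $ j)) (at x)"
    using g_comp_cont by (intro tendsto_vec_lambda) (simp add: isCont_def)
  then show ?thesis by (simp add: isCont_def vec_lambda_eta)
qed

lemma h_isCont: "isCont h x"
  using h_cont by (simp add: continuous_on_eq_continuous_at)

end



context rcd begin

definition Psi where "Psi x i = (\<lambda>s. f x + restr blk i (g x) \<bullet> s + L i / 2 * (norm s)\<^sup>2 + h (x + s))"

lemma rcd_dir_Psi: "rcd_dir f g h L blk x i = arg_min (Psi x i) (\<lambda>s. s \<in> blockvec blk i)"
  by (simp add: rcd_dir_def Psi_def)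

lemma Psi_cont: "isCont (Psi x i) s"
  unfolding Psi_def by (intro continuous_intros isCont_o2[OF _ h_isCont])

lemma h_growth: "\<exists>C\<ge>0. \<forall>s. h (x + s) - h x \<ge> - C - C * norm s"
proof -
  have "continuous_on (cball 0 1) (\<lambda>u. \<bar>h (x + u) - h x\<bar>)"
    by (intro continuous_at_imp_continuous_on ballI continuous_intros isCont_o2[OF _ h_isCont])
  then obtain u0 where u0: "u0 \<in> cball 0 1" "\<forall>u\<in>cball 0 1. \<bar>h (x + u) - h x\<bar> \<le> \<bar>h (x + u0) - h x\<bar>"
    using continuous_attains_sup[of "cball 0 1" "\<lambda>u. \<bar>h (x + u) - h x\<bar>"] by auto
  define C where "C = \<bar>h (x + u0) - h x\<bar>"
  have C: "\<bar>h (x + u) - h x\<bar> \<le> C" if "norm u \<le> 1" for u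
    using u0 that by (auto simp: C_def)
  have "h (x + s) - h x \<ge> - C - C * norm s" for s
  proof (cases "norm s \<le> 1")
    case True
    have "- C \<le> h (x + s) - h x" using C[of s] True by (simp add: abs_le_iff)
    moreover have "0 \<le> C * norm s" by (simp add: C_def)
    ultimately show ?thesis by linarith
  next
    case False
    define l where "l = 1 / norm s"
    have ns: "norm s > 1" using False by simp
    have l: "0 \<le> l" "l \<le> 1" "l * norm s = 1" using ns by (auto simp: l_def divide_simps)
    have "h ((1 - l) *\<^sub>R x + l *\<^sub>R (x + s)) \<le> (1 - l) * h x + l * h (x + s)"
      by (rule convex_onD[OF h_convex]) (use l in auto)
    moreover have "(1 - l) *\<^sub>R x + l *\<^sub>R (x + s) = x + l *\<^sub>R s" by (simp add: algebra_simps)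
    ultimately have le: "h (x + l *\<^sub>R s) - h x \<le> l * (h (x + s) - h x)" by (simp add: algebra_simps)
    have "norm (l *\<^sub>R s) \<le> 1" using l by simp
    then have "- C \<le> h (x + l *\<^sub>R s) - h x" using C[of "l *\<^sub>R s"] by (simp add: abs_le_iff)
    with le have "- C \<le> l * (h (x + s) - h x)" by simp
    then have "- C * norm s \<le> l * (h (x + s) - h x) * norm s"
      using False by (intro mult_right_mono) auto
    also have "\<dots> = (l * norm s) * (h (x + s) - h x)" by (simp add: mult_ac)
    also have "\<dots> = h (x + s) - h x" using l(3) by simp
    finally show ?thesis using C[of 0] by simp
  qed
  moreover have "C \<ge> 0" by (simp add: C_def)
  ultimately show ?thesis by blast
qed

lemma Psi_exists_min: "\<exists>m\<in>blockvec blk i. \<forall>s\<in>blockvec blk i. Psi x i m \<le> Psi x i s"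
proof -
  define a where "a = restr blk i (g x)"
  obtain C where C: "C \<ge> 0" "\<And>s. h (x + s) - h x \<ge> - C - C * norm s"
    using h_growth[of x] by blast
  have Li: "L i > 0" by (rule L_pos)
  define R where "R = 2 * (norm a + 2 * C) / L i + 1"
  have R1: "R \<ge> 1" using Li C by (simp add: R_def)
  have LR: "L i / 2 * R = norm a + 2 * C + L i / 2" using Li by (simp add: R_def field_simps)
  have far: "Psi x i s > Psi x i 0" if s: "norm s > R" for s
  proof -
    define r where "r = norm s"
    have r: "r > R" "r \<ge> 1" using s R1 by (auto simp: r_def)
    have f1: "a \<bullet> s \<ge> - (norm a * r)"
      using Cauchy_Schwarz_ineq2[of a s] by (simp add: r_def abs_le_iff)
    have f2: "h (x + s) - h x \<ge> - C - C * r" using C(2)[of s] by (simp add: r_def)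
    have "L i / 2 * R < L i / 2 * r" using r(1) Li by (intro mult_strict_left_mono) auto
    then have "L i / 2 * r > norm a + 2 * C + L i / 2" using LR by linarith
    then have f3: "L i / 2 * r * r \<ge> (norm a + 2 * C + L i / 2) * r"
      using r by (intro mult_right_mono) auto
    have "(C + L i / 2) * 1 \<le> (C + L i / 2) * r"
      using r(2) C(1) Li by (intro mult_left_mono) auto
    then have f4: "C + L i / 2 \<le> (C + L i / 2) * r" by simp
    have "a \<bullet> s + L i / 2 * r * r + (h (x + s) - h x) \<ge> - (norm a * r) + (norm a + 2 * C + L i / 2) * r + (- C - C * r)"
      using f1 f2 f3 by linarith
    also have "- (norm a * r) + (norm a + 2 * C + L i / 2) * r + (- C - C * r) = (C + L i / 2) * r - C"
      by (simp add: algebra_simps)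
    finally have "a \<bullet> s + L i / 2 * r * r + (h (x + s) - h x) \<ge> L i / 2" using f4 by linarith
    then have "a \<bullet> s + L i / 2 * r * r + (h (x + s) - h x) > 0" using Li by linarith
    then show ?thesis by (simp add: Psi_def r_def power2_eq_square a_def mult.assoc; linarith)
  qed
  define K where "K = cball 0 R \<inter> blockvec blk i"
  have "compact K" unfolding K_def by (intro compact_Int_closed compact_cball closed_blockvec)
  moreover have "0 \<in> K" using R1 by (simp add: K_def)
  moreover then have "K \<noteq> {}" by auto
  moreover have "continuous_on K (Psi x i)"
    by (intro continuous_at_imp_continuous_on ballI Psi_cont)
  ultimately obtain m where m: "m \<in> K" "\<forall>s\<in>K. Psi x i m \<le> Psi x i s"
    using continuous_attains_inf[of K "Psi x i"] by blast
  have "Psi x i m \<le> Psi x i s" if "s \<in> blockvec blk i" for s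
  proof (cases "norm s \<le> R")
    case True then show ?thesis using m that by (auto simp: K_def)
  next
    case False then show ?thesis using far[of s] m(2) \<open>0 \<in> K\<close> by force
  qed
  then show ?thesis using m by (auto simp: K_def)
qed

lemma rcd_dir_min:
  "rcd_dir f g h L blk x i \<in> blockvec blk i"
  "\<And>s. s \<in> blockvec blk i \<Longrightarrow> Psi x i (rcd_dir f g h L blk x i) \<le> Psi x i s"
proof -
  obtain m where "m \<in> blockvec blk i" "\<forall>s\<in>blockvec blk i. Psi x i m \<le> Psi x i s"
    using Psi_exists_min by blast
  then have "\<exists>m. is_arg_min (Psi x i) (\<lambda>s. s \<in> blockvec blk i) m"
    by (auto simp: is_arg_min_def not_less)
  then have "is_arg_min (Psi x i) (\<lambda>s. s \<in> blockvec blk i) (rcd_dir f g h L blk x i)"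
    unfolding rcd_dir_Psi arg_min_def by (rule someI_ex)
  then show "rcd_dir f g h L blk x i \<in> blockvec blk i"
    "\<And>s. s \<in> blockvec blk i \<Longrightarrow> Psi x i (rcd_dir f g h L blk x i) \<le> Psi x i s"
    by (auto simp: is_arg_min_def not_less)
qed

lemma h_mid: "h (x + ((1/2) *\<^sub>R d + (1/2) *\<^sub>R e)) \<le> h (x + d) / 2 + h (x + e) / 2"
proof -
  have "h ((1 - 1/2) *\<^sub>R (x + d) + (1/2) *\<^sub>R (x + e)) \<le> (1 - 1/2) * h (x + d) + (1/2) * h (x + e)"
    by (rule convex_onD[OF h_convex]) auto
  moreover have "(1 - 1/2) *\<^sub>R (x + d) + (1/2::real) *\<^sub>R (x + e) = x + ((1/2) *\<^sub>R d + (1/2) *\<^sub>R e)"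
    by (simp add: algebra_simps flip: scaleR_add_left)
  ultimately show ?thesis by simp
qed

lemma Psi_unique:
  assumes d: "d \<in> blockvec blk i" "\<And>s. s \<in> blockvec blk i \<Longrightarrow> Psi x i d \<le> Psi x i s"
    and e: "e \<in> blockvec blk i" "\<And>s. s \<in> blockvec blk i \<Longrightarrow> Psi x i e \<le> Psi x i s"
  shows "d = e"
proof -
  define a where "a = restr blk i (g x)"
  define m where "m = (1/2) *\<^sub>R d + (1/2::real) *\<^sub>R e"
  have mb: "m \<in> blockvec blk i" unfolding m_def by (intro blockvec_add blockvec_scale d e)
  have nm: "(norm m)\<^sup>2 = (norm d)\<^sup>2 / 2 + (norm e)\<^sup>2 / 2 - (norm (d - e))\<^sup>2 / 4"
    unfolding m_def power2_norm_eq_inner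
    by (simp add: inner_add_left inner_add_right inner_diff_left inner_diff_right inner_commute; simp add: field_simps)
  have am: "a \<bullet> m = a \<bullet> d / 2 + a \<bullet> e / 2" by (simp add: m_def inner_add_right)
  have hm: "h (x + m) \<le> h (x + d) / 2 + h (x + e) / 2" unfolding m_def by (rule h_mid)
  have pm: "Psi x i m = f x + (a \<bullet> d / 2 + a \<bullet> e / 2) + L i / 2 * ((norm d)\<^sup>2 / 2 + (norm e)\<^sup>2 / 2 - (norm (d - e))\<^sup>2 / 4) + h (x + m)"
    unfolding Psi_def a_def[symmetric] am nm ..
  have dist: "L i / 2 * ((norm d)\<^sup>2 / 2 + (norm e)\<^sup>2 / 2 - (norm (d - e))\<^sup>2 / 4)
     = L i / 2 * (norm d)\<^sup>2 / 2 + L i / 2 * (norm e)\<^sup>2 / 2 - L i / 8 * (norm (d - e))\<^sup>2"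
    by (simp add: algebra_simps)
  have pd: "Psi x i d = f x + a \<bullet> d + L i / 2 * (norm d)\<^sup>2 + h (x + d)" by (simp add: Psi_def a_def)
  have pe: "Psi x i e = f x + a \<bullet> e + L i / 2 * (norm e)\<^sup>2 + h (x + e)" by (simp add: Psi_def a_def)
  have "Psi x i m \<le> Psi x i d / 2 + Psi x i e / 2 - L i / 8 * (norm (d - e))\<^sup>2"
    using hm pm dist pd pe by linarith
  moreover have "Psi x i d \<le> Psi x i m" "Psi x i e \<le> Psi x i m" using d e mb by auto
  ultimately have "L i / 8 * (norm (d - e))\<^sup>2 \<le> 0" by linarith
  moreover have "L i > 0" by (rule L_pos)
  ultimately have "(norm (d - e))\<^sup>2 \<le> 0" by (simp add: mult_le_0_iff)
  then show ?thesis by simp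
qed

lemma Psi_descent:
  assumes d: "d \<in> blockvec blk i" "\<And>s. s \<in> blockvec blk i \<Longrightarrow> Psi x i d \<le> Psi x i s"
  shows "Psi x i d \<le> Psi x i 0 - L i / 4 * (norm d)\<^sup>2"
proof -
  define a where "a = restr blk i (g x)"
  have "h (x + ((1/2) *\<^sub>R d + (1/2) *\<^sub>R 0)) \<le> h (x + d) / 2 + h (x + 0) / 2" by (rule h_mid)
  then have hm: "h (x + (1/2) *\<^sub>R d) \<le> h (x + d) / 2 + h x / 2" by simp
  have "Psi x i d \<le> Psi x i ((1/2) *\<^sub>R d)" by (rule d(2)[OF blockvec_scale[OF d(1)]])
  also have "\<dots> = f x + a \<bullet> ((1/2) *\<^sub>R d) + L i / 2 * (norm ((1/2::real) *\<^sub>R d))\<^sup>2 + h (x + (1/2) *\<^sub>R d)"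
    unfolding Psi_def a_def ..
  also have "a \<bullet> ((1/2) *\<^sub>R d) = a \<bullet> d / 2" by simp
  also have "(norm ((1/2::real) *\<^sub>R d))\<^sup>2 = (norm d)\<^sup>2 / 4" by (simp add: power2_eq_square)
  also have "L i / 2 * ((norm d)\<^sup>2 / 4) = L i / 8 * (norm d)\<^sup>2" by simp
  finally have "Psi x i d \<le> f x + a \<bullet> d / 2 + L i / 8 * (norm d)\<^sup>2 + h (x + d) / 2 + h x / 2"
    using hm by linarith
  moreover have "Psi x i d = f x + a \<bullet> d + L i / 2 * (norm d)\<^sup>2 + h (x + d)"
    by (simp add: Psi_def a_def)
  moreover have "Psi x i 0 = f x + h x" by (simp add: Psi_def)
  ultimately show ?thesis by linarith
qed

lemma F_descent:
  "f (x + rcd_dir f g h L blk x i) + h (x + rcd_dir f g h L blk x i)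
     \<le> f x + h x - L i / 4 * (norm (rcd_dir f g h L blk x i))\<^sup>2"
proof -
  define d where "d = rcd_dir f g h L blk x i"
  have db: "d \<in> blockvec blk i" "\<And>s. s \<in> blockvec blk i \<Longrightarrow> Psi x i d \<le> Psi x i s"
    unfolding d_def by (rule rcd_dir_min)+
  have "f (x + d) \<le> f x + g x \<bullet> d + L i / 2 * (norm d)\<^sup>2" by (rule descent[OF db(1)])
  moreover have "Psi x i d = f x + restr blk i (g x) \<bullet> d + L i / 2 * (norm d)\<^sup>2 + h (x + d)"
    unfolding Psi_def ..
  moreover have "restr blk i (g x) \<bullet> d = g x \<bullet> d" by (rule inner_restr[OF db(1)])
  ultimately have "f (x + d) + h (x + d) \<le> Psi x i d" by linarith
  also have "\<dots> \<le> Psi x i 0 - L i / 4 * (norm d)\<^sup>2" by (rule Psi_descent[OF db])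
  also have "Psi x i 0 = f x + h x" by (simp add: Psi_def)
  finally show ?thesis unfolding d_def .
qed

end



context rcd begin

lemma hblk: "s \<in> blockvec blk i \<Longrightarrow> h (x + s) - h x = hb i (restr blk i x + s) - hb i (restr blk i x)"
  by (rule h_block[where h=h and hb=hb]) (rule h_sep)

lemma M1_eq: "M1 f g h L blk x = sqrt (\<Sum>i\<in>UNIV. L i * (norm (rcd_dir f g h L blk x i))\<^sup>2)"
proof -
  define d where "d i = rcd_dir f g h L blk x i" for i
  have db1: "d i \<in> blockvec blk i" for i unfolding d_def by (rule rcd_dir_min)
  have db2: "Psi x i (d i) \<le> Psi x i s" if "s \<in> blockvec blk i" for i s
    unfolding d_def using that by (rule rcd_dir_min)
  define q where "q i e = restr blk i (g x) \<bullet> e + L i / 2 * (norm e)\<^sup>2 + hb i (restr blk i x + e)" for i e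
  have Psi_q: "Psi x i e = f x + h x - hb i (restr blk i x) + q i e" if e: "e \<in> blockvec blk i" for i e
  proof -
    have "h (x + e) - h x = hb i (restr blk i x + e) - hb i (restr blk i x)"
      by (rule hblk[OF e])
    moreover have "Psi x i e = f x + restr blk i (g x) \<bullet> e + L i / 2 * (norm e)\<^sup>2 + h (x + e)"
      unfolding Psi_def ..
    ultimately show ?thesis unfolding q_def by linarith
  qed
  have qmin: "q i (d i) \<le> q i e" if "e \<in> blockvec blk i" for i e
    using db2[OF that] Psi_q[OF that] Psi_q[OF db1[of i]] by linarith
  define Q where "Q = (\<lambda>s. f x + g x \<bullet> s + 1/2 * (normL L blk s)\<^sup>2 + h (x + s))"
  have Q_q: "Q s = f x + (\<Sum>i\<in>UNIV. q i (restr blk i s))" for s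
  proof -
    have "g x \<bullet> s = (\<Sum>i\<in>UNIV. restr blk i (g x) \<bullet> restr blk i s)" by (simp add: sum_inner_restr)
    moreover have "1/2 * (normL L blk s)\<^sup>2 = (\<Sum>i\<in>UNIV. L i / 2 * (norm (restr blk i s))\<^sup>2)"
      by (simp add: normL_sq[OF L_pos] sum_distrib_left)
    moreover have "h (x + s) = (\<Sum>i\<in>UNIV. hb i (restr blk i x + restr blk i s))"
      by (simp add: h_sep restr_add)
    ultimately show ?thesis unfolding Q_def q_def by (simp add: sum.distrib)
  qed
  define D where "D = (\<Sum>i\<in>UNIV. d i)"
  have rD: "restr blk j D = d j" for j
  proof -
    have "restr blk j D = (\<Sum>i\<in>UNIV. if i = j then d j else 0)"
      unfolding D_def restr_sum
      by (intro sum.cong) (auto simp: restr_other[OF db1] restr_blockvec[OF db1])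
    then show ?thesis by simp
  qed
  have QD: "Q D \<le> Q s" for s
    unfolding Q_q rD by (simp add: sum_mono qmin restr_in_blockvec)
  have "\<exists>m. is_arg_min Q (\<lambda>s. True) m"
    using QD by (auto simp: is_arg_min_def not_less)
  then have am: "is_arg_min Q (\<lambda>s. True) (dL f g h L blk x)"
    unfolding dL_def Q_def[symmetric] arg_min_def by (rule someI_ex)
  define S where "S = dL f g h L blk x"
  have "Q S \<le> Q D" using am by (auto simp: is_arg_min_def not_less S_def)
  with QD[of S] have "(\<Sum>i\<in>UNIV. q i (d i)) = (\<Sum>i\<in>UNIV. q i (restr blk i S))"
    unfolding Q_q rD by simp
  then have qeq: "q i (d i) = q i (restr blk i S)" for i
    by (rule sum_mono_inv) (auto simp: qmin restr_in_blockvec)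
  have rS: "restr blk i S = d i" for i
  proof (rule Psi_unique)
    show "restr blk i S \<in> blockvec blk i" by (rule restr_in_blockvec)
    show "d i \<in> blockvec blk i" by (rule db1)
    show "Psi x i (d i) \<le> Psi x i s" if "s \<in> blockvec blk i" for s using db2 that by blast
    show "Psi x i (restr blk i S) \<le> Psi x i s" if "s \<in> blockvec blk i" for s
      using db2[OF that] Psi_q[OF restr_in_blockvec[of blk i S]] Psi_q[OF db1[of i]] qeq[of i] by linarith
  qed
  show ?thesis unfolding M1_def normL_dual_DL[OF L_pos] S_def[symmetric] rS d_def ..
qed

lemma stationary:
  assumes xk: "xk \<longlonglongrightarrow> xs"
    and dk: "\<And>i. (\<lambda>k. rcd_dir f g h L blk (xk k) i) \<longlonglongrightarrow> 0"
  shows "- (g xs) \<in> subdifferential h xs"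
proof -
  have blockineq: "h xs \<le> g xs \<bullet> s + L i / 2 * (norm s)\<^sup>2 + h (xs + s)"
    if s: "s \<in> blockvec blk i" for i s
  proof -
    define dd where "dd k = rcd_dir f g h L blk (xk k) i" for k
    have le: "g (xk k) \<bullet> dd k + L i / 2 * (norm (dd k))\<^sup>2 + h (xk k + dd k)
       \<le> g (xk k) \<bullet> s + L i / 2 * (norm s)\<^sup>2 + h (xk k + s)" for k
    proof -
      have m: "dd k \<in> blockvec blk i" unfolding dd_def by (rule rcd_dir_min)
      have "Psi (xk k) i (dd k) \<le> Psi (xk k) i s" unfolding dd_def using s by (rule rcd_dir_min)
      then show ?thesis unfolding Psi_def inner_restr[OF m] inner_restr[OF s] by simp
    qed
    have dd: "dd \<longlonglongrightarrow> 0" unfolding dd_def by (rule dk)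
    have lim1: "(\<lambda>k. g (xk k) \<bullet> dd k + L i / 2 * (norm (dd k))\<^sup>2 + h (xk k + dd k))
        \<longlonglongrightarrow> g xs \<bullet> 0 + L i / 2 * (norm (0::real^'n))\<^sup>2 + h (xs + 0)"
      by (intro tendsto_intros isCont_tendsto_compose[OF g_cont] isCont_tendsto_compose[OF h_isCont] xk dd)
    have lim2: "(\<lambda>k. g (xk k) \<bullet> s + L i / 2 * (norm s)\<^sup>2 + h (xk k + s))
        \<longlonglongrightarrow> g xs \<bullet> s + L i / 2 * (norm s)\<^sup>2 + h (xs + s)"
      by (intro tendsto_intros isCont_tendsto_compose[OF g_cont] isCont_tendsto_compose[OF h_isCont] xk)
    have "g xs \<bullet> 0 + L i / 2 * (norm (0::real^'n))\<^sup>2 + h (xs + 0) \<le> g xs \<bullet> s + L i / 2 * (norm s)\<^sup>2 + h (xs + s)"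
      by (rule LIMSEQ_le[OF lim1 lim2]) (use le in auto)
    then show ?thesis by simp
  qed
  have blocksub: "h (xs + s) - h xs \<ge> - (g xs \<bullet> s)" if s: "s \<in> blockvec blk i" for i s
  proof (rule ccontr)
    define c where "c = g xs \<bullet> s + h (xs + s) - h xs"
    assume "\<not> ?thesis"
    then have c: "c < 0" by (simp add: c_def)
    have sn: "s \<noteq> 0" using c by (auto simp: c_def)
    have Li: "L i > 0" by (rule L_pos)
    define n where "n = L i * (norm s)\<^sup>2"
    have n: "n > 0" using sn Li by (simp add: n_def)
    define t where "t = min 1 (- c / n)"
    have t: "t > 0" "t \<le> 1" "n * t \<le> - c" using c n
      by (auto simp: t_def min_def field_simps)
    have ts: "t *\<^sub>R s \<in> blockvec blk i" by (rule blockvec_scale[OF s])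
    have "h xs \<le> g xs \<bullet> (t *\<^sub>R s) + L i / 2 * (norm (t *\<^sub>R s))\<^sup>2 + h (xs + t *\<^sub>R s)"
      by (rule blockineq[OF ts])
    moreover have "h ((1 - t) *\<^sub>R xs + t *\<^sub>R (xs + s)) \<le> (1 - t) * h xs + t * h (xs + s)"
      by (rule convex_onD[OF h_convex]) (use t in auto)
    moreover have "(1 - t) *\<^sub>R xs + t *\<^sub>R (xs + s) = xs + t *\<^sub>R s" by (simp add: algebra_simps)
    moreover have "L i / 2 * (norm (t *\<^sub>R s))\<^sup>2 = t * (n * t) / 2"
      using t by (simp add: n_def power2_eq_square)
    ultimately have "0 \<le> t * (g xs \<bullet> s) + t * (n * t) / 2 + t * (h (xs + s) - h xs)"
      by (simp add: algebra_simps)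
    also have "\<dots> = t * (c + n * t / 2)" by (simp add: c_def algebra_simps)
    finally have "0 \<le> c + n * t / 2" using t by (simp add: zero_le_mult_iff)
    then show False using t c by linarith
  qed
  show ?thesis unfolding subdifferential_def
  proof (intro CollectI allI)
    fix y
    define s where "s i = restr blk i (y - xs)" for i
    have sb: "s i \<in> blockvec blk i" for i unfolding s_def by (rule restr_in_blockvec)
    have "h y - h xs = (\<Sum>i\<in>UNIV. hb i (restr blk i y) - hb i (restr blk i xs))"
      by (simp add: h_sep sum_subtractf)
    also have "\<dots> = (\<Sum>i\<in>UNIV. h (xs + s i) - h xs)"
    proof (intro sum.cong refl)
      fix i :: 'b
      have "h (xs + s i) - h xs = hb i (restr blk i xs + s i) - hb i (restr blk i xs)" by (rule hblk[OF sb])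
      also have "restr blk i xs + s i = restr blk i y" by (simp add: s_def restr_diff)
      finally show "hb i (restr blk i y) - hb i (restr blk i xs) = h (xs + s i) - h xs" by simp
    qed
    also have "\<dots> \<ge> (\<Sum>i\<in>UNIV. - (g xs \<bullet> s i))"
      by (intro sum_mono blocksub[OF sb])
    finally have "h y - h xs \<ge> - (\<Sum>i\<in>UNIV. g xs \<bullet> s i)" by (simp add: sum_negf)
    moreover have "(\<Sum>i\<in>UNIV. g xs \<bullet> s i) = g xs \<bullet> (y - xs)"
      unfolding s_def by (simp add: inner_sum_right[symmetric] sum_restr)
    ultimately show "h y \<ge> h xs + - g xs \<bullet> (y - xs)" by simp
  qed
qed

end



locale rcd_prob = rcd f h g hb L blk + prob_space M
  for f h :: "real^'n \<Rightarrow> real" and g and hb :: "'b::finite \<Rightarrow> real^'n \<Rightarrow> real" and L blk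
    and M :: "'a measure" +
  fixes I :: "nat \<Rightarrow> 'a \<Rightarrow> 'b" and x0 :: "real^'n"
  assumes indep: "indep_vars (\<lambda>_. count_space UNIV) I UNIV"
    and uniform: "\<And>k. distr M (count_space UNIV) (I k) = measure_pmf (pmf_of_set UNIV)"
    and F_bdd: "bdd_below (range (\<lambda>x. f x + h x))"
begin


lemma I_meas: "I k \<in> M \<rightarrow>\<^sub>M count_space UNIV"
  using indep unfolding indep_vars_def2 by auto

lemma I_eq: "{\<omega> \<in> space M. I k \<omega> = c} = I k -` {c} \<inter> space M" by auto

lemma I_sets: "{\<omega> \<in> space M. I k \<omega> = c} \<in> sets M"
  unfolding I_eq by (rule measurable_sets[OF I_meas]) simp

lemma prob_I: "prob {\<omega> \<in> space M. I k \<omega> = c} = 1 / real CARD('b)"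
proof -
  have "emeasure M {\<omega> \<in> space M. I k \<omega> = c} = emeasure (distr M (count_space UNIV) (I k)) {c}"
    unfolding I_eq by (rule emeasure_distr[symmetric]) (auto intro: I_meas)
  also have "\<dots> = ennreal (1 / real CARD('b))" by (simp add: uniform emeasure_pmf_single pmf_of_set)
  finally show ?thesis by (simp add: emeasure_eq_measure)
qed

definition Rm :: "nat \<Rightarrow> 'a \<Rightarrow> 'b list" where "Rm m \<omega> = map (\<lambda>j. I j \<omega>) (rev [0..<m])"

lemma Rm_0: "Rm 0 \<omega> = []" by (simp add: Rm_def)
lemma Rm_Suc: "Rm (Suc m) \<omega> = I m \<omega> # Rm m \<omega>" by (simp add: Rm_def)
lemma length_Rm[simp]: "length (Rm m \<omega>) = m" by (simp add: Rm_def)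
lemma rev_Rm_nth: "j < m \<Longrightarrow> rev (Rm m \<omega>) ! j = I j \<omega>" by (simp add: Rm_def rev_map)

definition Ev where "Ev ws = {\<omega> \<in> space M. Rm (length ws) \<omega> = ws}"

lemma Rm_eq_iff: assumes l: "length ws = m" shows "Rm m \<omega> = ws \<longleftrightarrow> (\<forall>j<m. I j \<omega> = rev ws ! j)"
proof -
  have "Rm m \<omega> = ws \<longleftrightarrow> rev (Rm m \<omega>) = rev ws" by simp
  also have "\<dots> \<longleftrightarrow> (\<forall>j<m. rev (Rm m \<omega>) ! j = rev ws ! j)" using l by (simp add: list_eq_iff_nth_eq)
  also have "\<dots> \<longleftrightarrow> (\<forall>j<m. I j \<omega> = rev ws ! j)" by (simp add: rev_Rm_nth)
  finally show ?thesis .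
qed

lemma Ev_INT: "ws \<noteq> [] \<Longrightarrow> Ev ws = (\<Inter>j\<in>{..<length ws}. {\<omega> \<in> space M. I j \<omega> = rev ws ! j})"
  by (auto simp: Ev_def Rm_eq_iff)

lemma Ev_sets[measurable]: "Ev ws \<in> sets M"
proof (cases "ws = []")
  case True then show ?thesis by (simp add: Ev_def Rm_0)
next
  case False
  show ?thesis unfolding Ev_INT[OF False]
  proof (rule sets.finite_INT)
    show "{..<length ws} \<noteq> {}" using False by (cases ws) auto
  qed (simp_all add: I_sets)
qed

lemma prob_Ev: "prob (Ev ws) = (1 / real CARD('b)) ^ length ws"
proof (cases "ws = []")
  case True then show ?thesis by (simp add: Ev_def Rm_0 prob_space)
next
  case False
  have ind: "indep_sets (\<lambda>i. {I i -` A \<inter> space M | A. A \<in> sets (count_space UNIV)}) UNIV"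
    by (rule conjunct2[OF indep[unfolded indep_vars_def2]])
  define A where "A j = {\<omega> \<in> space M. I j \<omega> = rev ws ! j}" for j
  have AF: "\<forall>j\<in>{..<length ws}. A j \<in> {I j -` B \<inter> space M | B. B \<in> sets (count_space UNIV)}"
  proof
    fix j assume "j \<in> {..<length ws}"
    show "A j \<in> {I j -` B \<inter> space M | B. B \<in> sets (count_space UNIV)}"
      unfolding A_def I_eq by (rule CollectI, rule exI[of _ "{rev ws ! j}"]) simp
  qed
  have "prob (\<Inter> (A ` {..<length ws})) = (\<Prod>j\<in>{..<length ws}. prob (A j))"
    by (rule indep_setsD[OF ind _ _ _ AF]) (use False in \<open>cases ws; auto\<close>)+
  also have "\<dots> = (\<Prod>j\<in>{..<length ws}. 1 / real CARD('b))" unfolding A_def prob_I ..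
  finally show ?thesis unfolding Ev_INT[OF False] A_def by simp
qed

definition W where "W m = {ws :: 'b list. length ws = m}"

lemma finite_W: "finite (W m)"
  using finite_lists_length_eq[of "UNIV :: 'b set" m] by (simp add: W_def)

lemma W_Suc: "W (Suc m) = (\<lambda>(ws, i). i # ws) ` (W m \<times> UNIV)"
  using lists_length_Suc_eq[of "UNIV :: 'b set" m] by (simp add: W_def)

lemma Rm_meas: "Rm m \<in> M \<rightarrow>\<^sub>M count_space UNIV"
  unfolding measurable_count_space_eq2_countable
proof (intro conjI ballI)
  show "Rm m \<in> space M \<rightarrow> UNIV" by simp
  fix ws :: "'b list"
  show "Rm m -` {ws} \<inter> space M \<in> sets M"
  proof (cases "length ws = m")
    case True
    then have "Rm m -` {ws} \<inter> space M = Ev ws" by (auto simp: Ev_def)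
    then show ?thesis using Ev_sets by simp
  next
    case False
    then have "Rm m -` {ws} \<inter> space M = {}" by auto
    then show ?thesis by simp
  qed
qed

lemma Rm_comp_meas: "(\<lambda>\<omega>. G (Rm m \<omega>)) \<in> borel_measurable M"
  by (rule measurable_compose[OF Rm_meas]) simp

lemma nn_integral_Rm: "(\<integral>\<^sup>+\<omega>. G (Rm m \<omega>) \<partial>M) = (\<Sum>ws\<in>W m. G ws) * ennreal ((1 / real CARD('b)) ^ m)"
proof -
  have eq: "G (Rm m \<omega>) = (\<Sum>ws\<in>W m. G ws * indicator (Ev ws) \<omega>)" if \<omega>: "\<omega> \<in> space M" for \<omega>
  proof -
    have "(\<Sum>ws\<in>W m. G ws * indicator (Ev ws) \<omega>) = (\<Sum>ws\<in>W m. if Rm m \<omega> = ws then G ws else 0)"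
      using \<omega> by (intro sum.cong refl) (auto simp: Ev_def W_def indicator_def)
    also have "\<dots> = G (Rm m \<omega>)" using finite_W[of m] by (simp add: W_def)
    finally show ?thesis by simp
  qed
  have "(\<integral>\<^sup>+\<omega>. G (Rm m \<omega>) \<partial>M) = (\<integral>\<^sup>+\<omega>. (\<Sum>ws\<in>W m. G ws * indicator (Ev ws) \<omega>) \<partial>M)"
    by (rule nn_integral_cong) (simp add: eq)
  also have "\<dots> = (\<Sum>ws\<in>W m. \<integral>\<^sup>+\<omega>. G ws * indicator (Ev ws) \<omega> \<partial>M)"
    by (rule nn_integral_sum) measurable
  also have "\<dots> = (\<Sum>ws\<in>W m. G ws * ennreal ((1 / real CARD('b)) ^ m))"
    by (intro sum.cong refl) (simp add: nn_integral_cmult_indicator emeasure_eq_measure prob_Ev W_def)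
  finally show ?thesis by (simp add: sum_distrib_right)
qed

definition iter where "iter \<omega> k = rcd_seq f g h L blk x0 (\<lambda>k. I k \<omega>) k"
definition X where "X k ws = rcd_seq f g h L blk x0 (\<lambda>j. rev ws ! j) k"

lemma rcd_seq_prefix:
  "(\<And>j. j < k \<Longrightarrow> a j = b j) \<Longrightarrow> rcd_seq f g h L blk x0 a k = rcd_seq f g h L blk x0 b k"
  by (induction k) auto

lemma iter_X: "iter \<omega> k = X k (Rm k \<omega>)"
  unfolding iter_def X_def by (rule rcd_seq_prefix) (simp add: rev_Rm_nth)

lemma X_Cons: "length ws = k \<Longrightarrow> X k (i # ws) = X k ws"
  unfolding X_def by (rule rcd_seq_prefix) (simp add: nth_append)

lemma iter_Suc: "iter \<omega> (Suc k) = iter \<omega> k + rcd_dir f g h L blk (iter \<omega> k) (I k \<omega>)"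
  by (simp add: iter_def)

lemma iter_0: "iter \<omega> 0 = x0" by (simp add: iter_def)

definition Y where "Y \<omega> k = (\<Sum>i\<in>UNIV. L i * (norm (rcd_dir f g h L blk (iter \<omega> k) i))\<^sup>2)"
definition Z where "Z \<omega> k = L (I k \<omega>) * (norm (rcd_dir f g h L blk (iter \<omega> k) (I k \<omega>)))\<^sup>2"
definition GY where "GY k ws = (\<Sum>i\<in>UNIV. L i * (norm (rcd_dir f g h L blk (X k ws) i))\<^sup>2)"
definition GZ where "GZ k ws = L (hd ws) * (norm (rcd_dir f g h L blk (X k (tl ws)) (hd ws)))\<^sup>2"

lemma Y_G: "Y \<omega> k = GY k (Rm k \<omega>)" by (simp add: Y_def GY_def iter_X)
lemma Z_G: "Z \<omega> k = GZ k (Rm (Suc k) \<omega>)" by (simp add: Z_def GZ_def iter_X Rm_Suc)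

lemma Y_nonneg: "Y \<omega> k \<ge> 0"
  unfolding Y_def by (intro sum_nonneg mult_nonneg_nonneg) (auto simp: less_imp_le[OF L_pos])
lemma Z_nonneg: "Z \<omega> k \<ge> 0"
  unfolding Z_def by (intro mult_nonneg_nonneg) (auto simp: less_imp_le[OF L_pos])

lemma Y_meas: "(\<lambda>\<omega>. ennreal (Y \<omega> k)) \<in> borel_measurable M"
  unfolding Y_G by (rule Rm_comp_meas)
lemma Z_meas: "(\<lambda>\<omega>. ennreal (Z \<omega> k)) \<in> borel_measurable M"
  unfolding Z_G by (rule Rm_comp_meas)

lemma int_YZ: "(\<integral>\<^sup>+\<omega>. ennreal (Y \<omega> k) \<partial>M) = ennreal (real CARD('b)) * (\<integral>\<^sup>+\<omega>. ennreal (Z \<omega> k) \<partial>M)"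
proof -
  define S where "S = (\<Sum>ws\<in>W k. ennreal (GY k ws))"
  have iY: "(\<integral>\<^sup>+\<omega>. ennreal (Y \<omega> k) \<partial>M) = S * ennreal ((1 / real CARD('b)) ^ k)"
    unfolding Y_G S_def by (rule nn_integral_Rm)
  have "(\<integral>\<^sup>+\<omega>. ennreal (Z \<omega> k) \<partial>M) = (\<Sum>ws\<in>W (Suc k). ennreal (GZ k ws)) * ennreal ((1 / real CARD('b)) ^ Suc k)"
    unfolding Z_G by (rule nn_integral_Rm)
  also have "(\<Sum>ws\<in>W (Suc k). ennreal (GZ k ws)) = (\<Sum>(ws, i)\<in>W k \<times> UNIV. ennreal (GZ k (i # ws)))"
    unfolding W_Suc by (subst sum.reindex[OF inj_split_Cons]) (simp add: case_prod_beta')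
  also have "\<dots> = (\<Sum>ws\<in>W k. \<Sum>i\<in>UNIV. ennreal (GZ k (i # ws)))"
    by (rule sum.cartesian_product[symmetric])
  also have "\<dots> = S" unfolding S_def GY_def
  proof (intro sum.cong refl)
    fix ws assume "ws \<in> W k"
    then have l: "length ws = k" by (simp add: W_def)
    have "(\<Sum>i\<in>UNIV. ennreal (GZ k (i # ws))) = (\<Sum>i\<in>UNIV. ennreal (L i * (norm (rcd_dir f g h L blk (X k ws) i))\<^sup>2))"
      by (simp add: GZ_def X_Cons[OF l])
    also have "\<dots> = ennreal (\<Sum>i\<in>UNIV. L i * (norm (rcd_dir f g h L blk (X k ws) i))\<^sup>2)"
      by (rule sum_ennreal) (auto simp: less_imp_le[OF L_pos])
    finally show "(\<Sum>i\<in>UNIV. ennreal (GZ k (i # ws))) = ennreal (\<Sum>i\<in>UNIV. L i * (norm (rcd_dir f g h L blk (X k ws) i))\<^sup>2)" .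
  qed
  finally have iZ: "(\<integral>\<^sup>+\<omega>. ennreal (Z \<omega> k) \<partial>M) = S * ennreal ((1 / real CARD('b)) ^ Suc k)" .
  have "real CARD('b) * (1 / real CARD('b)) ^ Suc k = (1 / real CARD('b)) ^ k" by simp
  then have "ennreal (real CARD('b)) * ennreal ((1 / real CARD('b)) ^ Suc k) = ennreal ((1 / real CARD('b)) ^ k)"
    by (metis ennreal_mult'' zero_le_divide_1_iff of_nat_0_le_iff zero_le_power)
  then show ?thesis unfolding iY iZ by (simp add: mult_ac)
qed


lemma F_iter: "f (iter \<omega> (Suc k)) + h (iter \<omega> (Suc k)) \<le> f (iter \<omega> k) + h (iter \<omega> k) - Z \<omega> k / 4"
  using F_descent[of "iter \<omega> k" "I k \<omega>"] by (simp add: iter_Suc Z_def)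

lemma sumZ: "(\<Sum>k<K. Z \<omega> k) \<le> 4 * (f x0 + h x0 - (f (iter \<omega> K) + h (iter \<omega> K)))"
proof (induction K)
  case 0 then show ?case by (simp add: iter_0)
next
  case (Suc K)
  then show ?case using F_iter[of \<omega> K] by simp
qed

lemma bound_exists: obtains C where "C \<ge> 0" "\<And>\<omega> K. (\<Sum>k<K. Z \<omega> k) \<le> C"
proof -
  obtain B where B: "\<And>x. B \<le> f x + h x" using F_bdd by (auto simp: bdd_below_def)
  define C where "C = 4 * (f x0 + h x0 - B)"
  have "(\<Sum>k<K. Z \<omega> k) \<le> C" for \<omega> K
    using sumZ[of \<omega> K] B[of "iter \<omega> K"] by (simp add: C_def)
  moreover have "C \<ge> 0" using B[of x0] by (simp add: C_def)
  ultimately show ?thesis using that by blast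
qed

lemma AE_Y: "AE \<omega> in M. (\<lambda>k. Y \<omega> k) \<longlonglongrightarrow> 0"
proof -
  obtain C where C: "C \<ge> 0" "\<And>\<omega> K. (\<Sum>k<K. Z \<omega> k) \<le> C" using bound_exists by blast
  have sZ: "(\<Sum>k. ennreal (Z \<omega> k)) \<le> ennreal C" for \<omega>
    unfolding suminf_eq_SUP
  proof (rule SUP_least)
    fix K
    have "(\<Sum>k<K. ennreal (Z \<omega> k)) = ennreal (\<Sum>k<K. Z \<omega> k)" by (rule sum_ennreal) (rule Z_nonneg)
    also have "\<dots> \<le> ennreal C" by (rule ennreal_leI) (rule C(2))
    finally show "(\<Sum>k<K. ennreal (Z \<omega> k)) \<le> ennreal C" .
  qed
  have mY: "(\<lambda>\<omega>. \<Sum>k. ennreal (Y \<omega> k)) \<in> borel_measurable M"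
    by (rule borel_measurable_suminf_order) (rule Y_meas)
  have "(\<Sum>k. \<integral>\<^sup>+\<omega>. ennreal (Z \<omega> k) \<partial>M) = (\<integral>\<^sup>+\<omega>. (\<Sum>k. ennreal (Z \<omega> k)) \<partial>M)"
    by (rule nn_integral_suminf[symmetric]) (rule Z_meas)
  also have "\<dots> \<le> (\<integral>\<^sup>+\<omega>. ennreal C \<partial>M)"
    by (rule nn_integral_mono) (rule sZ)
  also have "\<dots> = ennreal C * emeasure M (space M)" by (rule nn_integral_const)
  also have "\<dots> = ennreal C" by (simp add: emeasure_space_1)
  finally have iZ: "(\<Sum>k. \<integral>\<^sup>+\<omega>. ennreal (Z \<omega> k) \<partial>M) \<le> ennreal C" .
  have "(\<integral>\<^sup>+\<omega>. (\<Sum>k. ennreal (Y \<omega> k)) \<partial>M) = (\<Sum>k. \<integral>\<^sup>+\<omega>. ennreal (Y \<omega> k) \<partial>M)"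
    by (rule nn_integral_suminf) (rule Y_meas)
  also have "\<dots> = (\<Sum>k. ennreal (real CARD('b)) * (\<integral>\<^sup>+\<omega>. ennreal (Z \<omega> k) \<partial>M))"
    by (simp only: int_YZ)
  also have "\<dots> = ennreal (real CARD('b)) * (\<Sum>k. \<integral>\<^sup>+\<omega>. ennreal (Z \<omega> k) \<partial>M)"
    by (rule ennreal_suminf_cmult)
  also have "\<dots> \<le> ennreal (real CARD('b)) * ennreal C"
    by (rule mult_left_mono[OF iZ]) simp
  also have "\<dots> = ennreal (real CARD('b) * C)" by (rule ennreal_mult''[symmetric]) (rule C(1))
  also have "\<dots> < \<infinity>" by simp
  finally have "(\<integral>\<^sup>+\<omega>. (\<Sum>k. ennreal (Y \<omega> k)) \<partial>M) \<noteq> \<infinity>" by simp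
  from nn_integral_PInf_AE[OF mY this]
  show ?thesis
  proof (rule eventually_mono)
    fix \<omega> assume "(\<Sum>k. ennreal (Y \<omega> k)) \<noteq> \<infinity>"
    then have "summable (\<lambda>k. Y \<omega> k)" by (intro summable_suminf_not_top Y_nonneg) simp
    then show "(\<lambda>k. Y \<omega> k) \<longlonglongrightarrow> 0" by (rule summable_LIMSEQ_zero)
  qed
qed

lemma dir_to_zero:
  assumes "(\<lambda>k. Y \<omega> k) \<longlonglongrightarrow> 0"
  shows "(\<lambda>k. rcd_dir f g h L blk (iter \<omega> k) i) \<longlonglongrightarrow> 0"
proof -
  have Li: "L i > 0" by (rule L_pos)
  have le: "L i * (norm (rcd_dir f g h L blk (iter \<omega> k) i))\<^sup>2 \<le> Y \<omega> k" for k
    unfolding Y_def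
    by (rule member_le_sum) (auto intro: mult_nonneg_nonneg less_imp_le[OF L_pos])
  have "(\<lambda>k. Y \<omega> k / L i) \<longlonglongrightarrow> 0 / L i" by (intro tendsto_intros assms) (use Li in simp)
  then have lim0: "(\<lambda>k. Y \<omega> k / L i) \<longlonglongrightarrow> 0" by simp
  have bnd: "(norm (rcd_dir f g h L blk (iter \<omega> k) i))\<^sup>2 \<le> Y \<omega> k / L i" for k
    using le[of k] by (simp add: pos_le_divide_eq[OF Li] mult.commute)
  have "(\<lambda>k. (norm (rcd_dir f g h L blk (iter \<omega> k) i))\<^sup>2) \<longlonglongrightarrow> 0"
    by (rule tendsto_sandwich[OF _ _ tendsto_const lim0]) (simp_all add: bnd)
  then have "(\<lambda>k. sqrt ((norm (rcd_dir f g h L blk (iter \<omega> k) i))\<^sup>2)) \<longlonglongrightarrow> sqrt 0"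
    by (rule tendsto_real_sqrt)
  then have "(\<lambda>k. norm (rcd_dir f g h L blk (iter \<omega> k) i)) \<longlonglongrightarrow> 0" by simp
  then show ?thesis by (simp add: tendsto_norm_zero_iff)
qed

theorem main:
  "(AE \<omega> in M. (\<lambda>k. M1 f g h L blk (iter \<omega> k)) \<longlonglongrightarrow> 0)
   \<and> (\<exists>Fbar \<in> borel_measurable M. AE \<omega> in M. (\<lambda>k. f (iter \<omega> k) + h (iter \<omega> k)) \<longlonglongrightarrow> Fbar \<omega>)
   \<and> (AE \<omega> in M. \<forall>xstar r. strict_mono r \<and> ((\<lambda>k. iter \<omega> k) \<circ> r) \<longlonglongrightarrow> xstar
        \<longrightarrow> (0::real^'n) \<in> {g xstar + v | v. v \<in> subdifferential h xstar})"
proof (intro conjI)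
  show "AE \<omega> in M. (\<lambda>k. M1 f g h L blk (iter \<omega> k)) \<longlonglongrightarrow> 0"
    using AE_Y
  proof (rule eventually_mono)
    fix \<omega> assume "(\<lambda>k. Y \<omega> k) \<longlonglongrightarrow> 0"
    then have "(\<lambda>k. sqrt (Y \<omega> k)) \<longlonglongrightarrow> sqrt 0" by (rule tendsto_real_sqrt)
    then show "(\<lambda>k. M1 f g h L blk (iter \<omega> k)) \<longlonglongrightarrow> 0" by (simp add: M1_eq Y_def)
  qed
  show "AE \<omega> in M. \<forall>xstar r. strict_mono r \<and> ((\<lambda>k. iter \<omega> k) \<circ> r) \<longlonglongrightarrow> xstar
        \<longrightarrow> (0::real^'n) \<in> {g xstar + v | v. v \<in> subdifferential h xstar}"
    using AE_Y
  proof (rule eventually_mono)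
    fix \<omega> assume Y0: "(\<lambda>k. Y \<omega> k) \<longlonglongrightarrow> 0"
    show "\<forall>xstar r. strict_mono r \<and> ((\<lambda>k. iter \<omega> k) \<circ> r) \<longlonglongrightarrow> xstar
        \<longrightarrow> (0::real^'n) \<in> {g xstar + v | v. v \<in> subdifferential h xstar}"
    proof (intro allI impI, elim conjE)
      fix xstar r assume r: "strict_mono (r :: nat \<Rightarrow> nat)" and conv: "((\<lambda>k. iter \<omega> k) \<circ> r) \<longlonglongrightarrow> xstar"
      have xk: "(\<lambda>k. iter \<omega> (r k)) \<longlonglongrightarrow> xstar" using conv by (simp add: o_def)
      have dk: "(\<lambda>k. rcd_dir f g h L blk (iter \<omega> (r k)) i) \<longlonglongrightarrow> 0" for i
        using LIMSEQ_subseq_LIMSEQ[OF dir_to_zero[OF Y0, of i] r] by (simp add: o_def)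
      have "- g xstar \<in> subdifferential h xstar" by (rule stationary[OF xk dk])
      moreover have "(0::real^'n) = g xstar + - g xstar" by simp
      ultimately show "(0::real^'n) \<in> {g xstar + v | v. v \<in> subdifferential h xstar}" by blast
    qed
  qed
  define Fs where "Fs k \<omega> = f (iter \<omega> k) + h (iter \<omega> k)" for k \<omega>
  have conv: "\<exists>l. (\<lambda>k. Fs k \<omega>) \<longlonglongrightarrow> l" for \<omega>
  proof -
    obtain B where B: "\<And>x. B \<le> f x + h x" using F_bdd by (auto simp: bdd_below_def)
    have "antimono_on UNIV (\<lambda>k. Fs k \<omega>)"
    proof (rule decseq_SucI)
      fix n
      show "Fs (Suc n) \<omega> \<le> Fs n \<omega>" unfolding Fs_def using F_iter[of \<omega> n] Z_nonneg[of \<omega> n] by linarith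
    qed
    moreover have "\<forall>k. B \<le> Fs k \<omega>" using B by (simp add: Fs_def)
    ultimately show ?thesis by (rule decseq_convergent) blast
  qed
  define Fbar where "Fbar \<omega> = lim (\<lambda>k. Fs k \<omega>)" for \<omega>
  have lim: "(\<lambda>k. Fs k \<omega>) \<longlonglongrightarrow> Fbar \<omega>" for \<omega>
    using conv[of \<omega>] unfolding Fbar_def by (metis convergent_def convergent_LIMSEQ_iff)
  have "Fbar \<in> borel_measurable M"
  proof (rule borel_measurable_LIMSEQ_real[where u=Fs])
    show "(\<lambda>k. Fs k \<omega>) \<longlonglongrightarrow> Fbar \<omega>" if "\<omega> \<in> space M" for \<omega> by (rule lim)
    show "Fs k \<in> borel_measurable M" for k
      unfolding Fs_def iter_X by (rule Rm_comp_meas)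
  qed
  moreover have "AE \<omega> in M. (\<lambda>k. f (iter \<omega> k) + h (iter \<omega> k)) \<longlonglongrightarrow> Fbar \<omega>"
    using lim by (simp add: Fs_def)
  ultimately show "\<exists>Fbar \<in> borel_measurable M. AE \<omega> in M. (\<lambda>k. f (iter \<omega> k) + h (iter \<omega> k)) \<longlonglongrightarrow> Fbar \<omega>"
    by blast
qed

end

theorem theorem1:
  fixes f h :: "real^'n \<Rightarrow> real"
    and g :: "real^'n \<Rightarrow> real^'n"
    and hb :: "'b::finite \<Rightarrow> real^'n \<Rightarrow> real"
    and L :: "'b \<Rightarrow> real"
    and blk :: "'n \<Rightarrow> 'b"
    and M :: "'a measure"
    and I :: "nat \<Rightarrow> 'a \<Rightarrow> 'b"
    and x0 :: "real^'n"
  assumes blocks_nonempty: "surj blk"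
    and grad: "\<And>x. (f has_derivative (\<lambda>v. g x \<bullet> v)) (at x)"
    and L_pos: "\<And>i. L i > 0"
    and lipschitz: "\<And>i x s. s \<in> blockvec blk i \<Longrightarrow>
          norm (restr blk i (g (x + s)) - restr blk i (g x)) \<le> L i * norm s"
    and h_sep: "\<And>x. h x = (\<Sum>i\<in>UNIV. hb i (restr blk i x))"
    and hb_convex: "\<And>i. convex_on (blockvec blk i) (hb i)"
    and h_convex: "convex_on UNIV h"
    and h_cont: "continuous_on UNIV h"
    and F_bounded: "bdd_below (range (\<lambda>x. f x + h x))"
    and P: "prob_space M"
    and indep: "prob_space.indep_vars M (\<lambda>_. count_space UNIV) I UNIV"
    and uniform: "\<And>k. distr M (count_space UNIV) (I k) = measure_pmf (pmf_of_set UNIV)"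
  shows "(AE \<omega> in M. (\<lambda>k. M1 f g h L blk (rcd_seq f g h L blk x0 (\<lambda>k. I k \<omega>) k))
              \<longlonglongrightarrow> 0)
       \<and> (\<exists>Fbar \<in> borel_measurable M.
            AE \<omega> in M. (\<lambda>k. f (rcd_seq f g h L blk x0 (\<lambda>k. I k \<omega>) k)
                           + h (rcd_seq f g h L blk x0 (\<lambda>k. I k \<omega>) k)) \<longlonglongrightarrow> Fbar \<omega>)
       \<and> (AE \<omega> in M. \<forall>xstar r. strict_mono r \<and>
              ((\<lambda>k. rcd_seq f g h L blk x0 (\<lambda>k. I k \<omega>) k) \<circ> r) \<longlonglongrightarrow> xstar
            \<longrightarrow> (0::real^'n) \<in> {g xstar + v | v. v \<in> subdifferential h xstar})"
  proof -
  have "rcd_prob f h g hb L blk M I"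
    by (intro rcd_prob.intro rcd.intro rcd_prob_axioms.intro P grad L_pos lipschitz h_sep h_convex h_cont indep uniform F_bounded)
  then interpret rcd_prob f h g hb L blk M I x0 .
  show ?thesis using main unfolding iter_def .
qed

end
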